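(* Let $t \geq 1$ be an integer and let $\{(A_i, B_i) : i \in I\}$ be a finite collection of pairs of finite sets (indexed by a finite set $I$) such that: (a) $|A_i \cap B_i| \leq t$ for each $i \in I$; (b) $|A_i \cap B_j| \geq t$ for all $i, j \in I$ with $i \neq j$; (c') if $A_i \cap B_i = A_j \cap B_j$ for some $i \neq j$, then it is not the case that $A_i \cap B_j = A_i \cap B_i = A_j \cap B_i$. Then $$\sum_{i \in I} \binom{|A_i \cup B_i|}{|A_i \setminus B_i|}^{-1} \binom{|B_i|}{|A_i \cap B_i|}^{-1} \leq 1.$$ *)

theory Defs
  imports Complex_Main
begin

end

theory Submission
  imports Defs "HOL-Combinatorics.Multiset_Permutations"
begin

fun idx :: "'a list \<Rightarrow> 'a \<Rightarrow> nat" where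
  "idx [] x = 0"
| "idx (y#ys) x = (if y = x then 0 else Suc (idx ys x))"

definition pat :: "'a set \<Rightarrow> 'a set \<Rightarrow> 'a list \<Rightarrow> bool" where
  "pat A B xs \<longleftrightarrow> (\<forall>x\<in>A. \<forall>y\<in>B. (x \<notin> B \<or> y \<notin> A) \<longrightarrow> idx xs x < idx xs y)"

lemma pat_Cons:
  "pat A B (x#xs) \<longleftrightarrow> (x\<in>B \<longrightarrow> (\<forall>p\<in>A-{x}. p\<in>B \<and> x\<in>A)) \<and> pat (A-{x}) (B-{x}) xs"
proof
  assume h: "pat A B (x#xs)"
  have 1: "x\<in>B \<longrightarrow> (\<forall>p\<in>A-{x}. p\<in>B \<and> x\<in>A)"
  proof (intro impI ballI)
    fix p assume "x \<in> B" "p \<in> A - {x}"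
    thus "p \<in> B \<and> x \<in> A" using h unfolding pat_def
      by (metis DiffD1 DiffD2 idx.simps(2) insertI1 less_nat_zero_code)
  qed
  have 2: "pat (A-{x}) (B-{x}) xs" unfolding pat_def
  proof (intro ballI impI)
    fix p q assume "p \<in> A - {x}" "q \<in> B - {x}" "p \<notin> B - {x} \<or> q \<notin> A - {x}"
    hence "idx (x#xs) p < idx (x#xs) q" using h unfolding pat_def by auto
    thus "idx xs p < idx xs q" using \<open>p \<in> A - {x}\<close> \<open>q \<in> B - {x}\<close> by auto
  qed
  from 1 2 show "(x\<in>B \<longrightarrow> (\<forall>p\<in>A-{x}. p\<in>B \<and> x\<in>A)) \<and> pat (A-{x}) (B-{x}) xs" ..
next
  assume h: "(x\<in>B \<longrightarrow> (\<forall>p\<in>A-{x}. p\<in>B \<and> x\<in>A)) \<and> pat (A-{x}) (B-{x}) xs"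
  show "pat A B (x#xs)" unfolding pat_def
  proof (intro ballI impI)
    fix p q assume pq: "p \<in> A" "q \<in> B" "p \<notin> B \<or> q \<notin> A"
    show "idx (x#xs) p < idx (x#xs) q"
    proof (cases "q = x")
      case True
      with h pq show ?thesis by (cases "p = x") auto
    next
      case False
      show ?thesis
      proof (cases "p = x")
        case True with False show ?thesis by simp
      next
        case pF: False
        with False pq h have "idx xs p < idx xs q" unfolding pat_def by auto
        with False pF show ?thesis by simp
      qed
    qed
  qed
qed

lemma key1:
  assumes "pat Ai Bi xs" "e \<in> Bi" "\<forall>y\<in>Bj. idx xs e \<le> idx xs y" "finite Ai"
    "card (Ai \<inter> Bi) \<le> t" "t \<le> card (Ai \<inter> Bj)" "t \<ge> 1"
  shows "Ai \<inter> Bj = Ai \<inter> Bi \<and> e \<in> Ai"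
proof -
  have sub: "Ai \<inter> Bj \<subseteq> Ai \<inter> Bi"
  proof
    fix x assume x: "x \<in> Ai \<inter> Bj"
    show "x \<in> Ai \<inter> Bi"
    proof (rule ccontr)
      assume "x \<notin> Ai \<inter> Bi"
      hence "idx xs x < idx xs e" using assms(1,2) x unfolding pat_def by auto
      moreover have "idx xs e \<le> idx xs x" using assms(3) x by auto
      ultimately show False by simp
    qed
  qed
  have eq: "Ai \<inter> Bj = Ai \<inter> Bi"
  proof (rule card_subset_eq)
    show "card (Ai \<inter> Bj) = card (Ai \<inter> Bi)"
      using card_mono[OF _ sub] assms by (meson finite_Int le_antisym order_trans)
  qed (use sub assms in auto)
  have "Ai \<inter> Bj \<noteq> {}" using assms(6,7) by auto
  then obtain z where z: "z \<in> Ai \<inter> Bj" by auto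
  have "e \<in> Ai"
  proof (rule ccontr)
    assume "e \<notin> Ai"
    hence "idx xs z < idx xs e" using assms(1,2) z unfolding pat_def by auto
    moreover have "idx xs e \<le> idx xs z" using assms(3) z by auto
    ultimately show False by simp
  qed
  with eq show ?thesis by simp
qed

lemma key2:
  assumes "pat Ai Bi xs" "f \<in> Ai" "\<forall>x\<in>Aj. idx xs x \<le> idx xs f"
  shows "Aj \<inter> Bi \<subseteq> Ai \<inter> Bi"
proof
  fix x assume x: "x \<in> Aj \<inter> Bi"
  show "x \<in> Ai \<inter> Bi"
  proof (rule ccontr)
    assume "x \<notin> Ai \<inter> Bi"
    hence "idx xs f < idx xs x" using assms(1,2) x unfolding pat_def by auto
    moreover have "idx xs x \<le> idx xs f" using assms(3) x by auto
    ultimately show False by simp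
  qed
qed

lemma ex_min: "finite S \<Longrightarrow> S \<noteq> {} \<Longrightarrow> \<exists>e\<in>S. \<forall>y\<in>S. (g e::nat) \<le> g y"
proof -
  assume "finite S" "S \<noteq> {}"
  hence "Min (g ` S) \<in> g ` S" by simp
  then obtain e where "e \<in> S" "g e = Min (g ` S)" by auto
  thus ?thesis using \<open>finite S\<close> by (metis Min_le finite_imageI imageI)
qed

lemma ex_max: "finite S \<Longrightarrow> S \<noteq> {} \<Longrightarrow> \<exists>e\<in>S. \<forall>y\<in>S. g y \<le> (g e::nat)"
proof -
  assume "finite S" "S \<noteq> {}"
  hence "Max (g ` S) \<in> g ` S" by simp
  then obtain e where "e \<in> S" "g e = Max (g ` S)" by auto
  thus ?thesis using \<open>finite S\<close> by (metis Max_ge finite_imageI imageI)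
qed

lemma disj:
  assumes t: "t \<ge> 1" and fin: "finite Ai" "finite Aj" "finite Bi" "finite Bj"
    and ci: "card (Ai \<inter> Bi) \<le> t" and cj: "card (Aj \<inter> Bj) \<le> t"
    and bij: "t \<le> card (Ai \<inter> Bj)" and bji: "t \<le> card (Aj \<inter> Bi)"
    and pi: "pat Ai Bi xs" and pj: "pat Aj Bj xs"
  shows "Ai \<inter> Bi = Aj \<inter> Bj \<and> Ai \<inter> Bj = Ai \<inter> Bi \<and> Ai \<inter> Bi = Aj \<inter> Bi"
proof -
  have "Ai \<inter> Bj \<noteq> {}" using bij t by auto
  hence ne: "Bi \<union> Bj \<noteq> {}" by auto
  obtain e where e: "e \<in> Bi \<union> Bj" "\<forall>y\<in>Bi \<union> Bj. idx xs e \<le> idx xs y"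
    using ex_min[OF _ ne, of "idx xs"] fin by auto
  have eb: "e \<in> Bi \<and> e \<in> Bj"
  proof (cases "e \<in> Bi")
    case True
    from key1[OF pi True _ fin(1) ci bij t] e(2) have "Ai \<inter> Bj = Ai \<inter> Bi \<and> e \<in> Ai" by auto
    with True show ?thesis by auto
  next
    case False
    hence "e \<in> Bj" using e by auto
    from key1[OF pj this _ fin(2) cj bji t] e(2) have "Aj \<inter> Bi = Aj \<inter> Bj \<and> e \<in> Aj" by auto
    with \<open>e \<in> Bj\<close> show ?thesis by auto
  qed
  from key1[OF pi _ _ fin(1) ci bij t] eb e(2) have h1: "Ai \<inter> Bj = Ai \<inter> Bi" by auto
  from key1[OF pj _ _ fin(2) cj bji t] eb e(2) have h2: "Aj \<inter> Bi = Aj \<inter> Bj" by auto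
  have ne2: "Ai \<union> Aj \<noteq> {}" using \<open>Ai \<inter> Bj \<noteq> {}\<close> by auto
  obtain f where f: "f \<in> Ai \<union> Aj" "\<forall>y\<in>Ai \<union> Aj. idx xs y \<le> idx xs f"
    using ex_max[OF _ ne2, of "idx xs"] fin by auto
  have ceq: "Ai \<inter> Bi = Aj \<inter> Bj"
  proof (cases "f \<in> Ai")
    case True
    from key2[OF pi True] f(2) have sub: "Aj \<inter> Bi \<subseteq> Ai \<inter> Bi" by auto
    have "Aj \<inter> Bi = Ai \<inter> Bi"
    proof (rule card_subset_eq)
      show "card (Aj \<inter> Bi) = card (Ai \<inter> Bi)"
        using card_mono[OF _ sub] fin ci bji by (meson finite_Int le_antisym order_trans)
    qed (use sub fin in auto)
    with h2 show ?thesis by simp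
  next
    case False
    hence "f \<in> Aj" using f by auto
    from key2[OF pj this] f(2) have sub: "Ai \<inter> Bj \<subseteq> Aj \<inter> Bj" by auto
    have "Ai \<inter> Bj = Aj \<inter> Bj"
    proof (rule card_subset_eq)
      show "card (Ai \<inter> Bj) = card (Aj \<inter> Bj)"
        using card_mono[OF _ sub] fin cj bij by (meson finite_Int le_antisym order_trans)
    qed (use sub fin in auto)
    with h1 show ?thesis by simp
  qed
  with h1 h2 show ?thesis by simp
qed

lemma card_fact_remove: "finite S \<Longrightarrow> x \<in> S \<Longrightarrow> card S * fact (card (S - {x})) = fact (card S)"
proof -
  assume "finite S" "x \<in> S"
  hence e: "card S = Suc (card (S - {x}))" using card_Suc_Diff1 by metis
  show ?thesis unfolding e by simp
qed

lemma card_pos_mem: "x \<in> S \<Longrightarrow> finite S \<Longrightarrow> card S \<ge> 1"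
  by (cases "S = {}") (auto simp: Suc_le_eq card_gt_0_iff)

lemma count:
  fixes U X Y Z :: "'a set"
  assumes "finite U" "X \<inter> Y = {}" "X \<inter> Z = {}" "Y \<inter> Z = {}" "X \<union> Y \<union> Z \<subseteq> U"
  shows "card {xs \<in> permutations_of_set U. pat (X \<union> Y) (Y \<union> Z) xs} * fact (card X + card Y + card Z)
         = fact (card U) * (fact (card X) * fact (card Y) * fact (card Z))"
  using assms
proof (induction "card U" arbitrary: U X Y Z)
  case 0
  then have "U = {}" by auto
  with 0 have "X = {}" "Y = {}" "Z = {}" by auto
  then show ?case using \<open>U = {}\<close> by (simp add: pat_def)
next
  case (Suc n)
  define Q where "Q x \<longleftrightarrow> (x \<in> Y \<union> Z \<longrightarrow> (\<forall>p\<in>(X \<union> Y) - {x}. p \<in> Y \<union> Z \<and> x \<in> X \<union> Y))" for x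
  define G where "G x = card {ys \<in> permutations_of_set (U - {x}). pat ((X \<union> Y) - {x}) ((Y \<union> Z) - {x}) ys}" for x
  define W where "W = X \<union> Y \<union> Z"
  define D where "D = (if X \<noteq> {} then X else if Y \<noteq> {} then Y else Z)"
  define P :: nat where "P = fact (card X) * fact (card Y) * fact (card Z)"
  define w where "w = card X + card Y + card Z"
  have finU: "finite U" using Suc.prems by simp
  have finX: "finite X" "finite Y" "finite Z" using Suc.prems finite_subset by auto
  have Une: "U \<noteq> {}" using Suc.hyps(2) by auto
  have seteq: "{xs \<in> permutations_of_set U. pat (X \<union> Y) (Y \<union> Z) xs} =
      (\<Union>x\<in>U. (#) x ` {ys \<in> permutations_of_set (U - {x}). Q x \<and> pat ((X \<union> Y) - {x}) ((Y \<union> Z) - {x}) ys})"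
    by (subst permutations_of_set_nonempty[OF Une]) (auto simp: pat_Cons Q_def)
  have "card {xs \<in> permutations_of_set U. pat (X \<union> Y) (Y \<union> Z) xs} =
      (\<Sum>x\<in>U. card ((#) x ` {ys \<in> permutations_of_set (U - {x}). Q x \<and> pat ((X \<union> Y) - {x}) ((Y \<union> Z) - {x}) ys}))"
    unfolding seteq by (rule card_UN_disjoint) (auto simp: finU)
  also have "\<dots> = (\<Sum>x\<in>U. if Q x then G x else 0)"
    by (rule sum.cong) (auto simp: card_image G_def)
  also have "\<dots> = (\<Sum>x\<in>{x\<in>U. Q x}. G x)" by (simp add: sum.inter_filter finU)
  also have "{x\<in>U. Q x} = (U - W) \<union> D"
    using Suc.prems unfolding Q_def D_def W_def by auto
  also have "(\<Sum>x\<in>(U - W) \<union> D. G x) = (\<Sum>x\<in>U - W. G x) + (\<Sum>x\<in>D. G x)"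
    by (rule sum.union_disjoint) (use finU finX in \<open>auto simp: D_def W_def\<close>)
  finally have N: "card {xs \<in> permutations_of_set U. pat (X \<union> Y) (Y \<union> Z) xs} = (\<Sum>x\<in>U - W. G x) + (\<Sum>x\<in>D. G x)" .
  have cW: "card W = w" unfolding W_def w_def using Suc.prems finX
    by (simp add: card_Un_disjoint Int_Un_distrib2)
  have wle: "w \<le> card U" using card_mono[OF finU] Suc.prems cW W_def by auto
  have G1: "G x * fact w = fact n * P" if x: "x \<in> U - W" for x
  proof -
    have e: "X - {x} = X" "Y - {x} = Y" "Z - {x} = Z" using x W_def by auto
    have "(X \<union> Y) - {x} = X \<union> Y" "(Y \<union> Z) - {x} = Y \<union> Z" using e by auto
    moreover have "n = card (U - {x})" using Suc.hyps(2) x by simp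
    moreover have "X \<union> Y \<union> Z \<subseteq> U - {x}" using x Suc.prems W_def by auto
    moreover have "finite (U - {x})" using finU by simp
    ultimately show ?thesis using Suc.hyps(1)[of "U - {x}" X Y Z] Suc.prems(2,3,4)
      unfolding G_def w_def P_def e by presburger
  qed
  have S1: "(\<Sum>x\<in>U - W. G x) * fact w = (card U - w) * (fact n * P)"
  proof -
    have "(\<Sum>x\<in>U - W. G x) * fact w = (\<Sum>x\<in>U - W. G x * fact w)" by (simp add: sum_distrib_right)
    also have "\<dots> = (\<Sum>x\<in>U - W. fact n * P)" using G1 by simp
    also have "\<dots> = card (U - W) * (fact n * P)" by simp
    also have "card (U - W) = card U - w"
      using card_Diff_subset[of W U] cW Suc.prems finX unfolding W_def by auto
    finally show ?thesis .
  qed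
  have S2: "(\<Sum>x\<in>D. G x) * fact w = w * (fact n * P)"
  proof (cases "D = {}")
    case True
    hence "X = {}" "Y = {}" "Z = {}" unfolding D_def by (auto split: if_splits)
    thus ?thesis using True w_def by simp
  next
    case False
    have finD: "finite D" using finX D_def by simp
    have dpos: "card D > 0" using False finD by (simp add: card_gt_0_iff)
    have G2: "card D * (G x * fact w) = w * (fact n * P)" if x: "x \<in> D" for x
    proof -
      have xU: "x \<in> U" "x \<in> W" using x Suc.prems unfolding D_def W_def by (auto split: if_splits)
      define Px :: nat where "Px = fact (card (X - {x})) * fact (card (Y - {x})) * fact (card (Z - {x}))"
      have wx: "card (X - {x}) + card (Y - {x}) + card (Z - {x}) = w - 1"
        using xU(2) finX Suc.prems unfolding w_def W_def
        by (auto simp: card_Diff_singleton_if dest: card_pos_mem)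
      have wpos: "w \<ge> 1" using card_pos_mem[OF xU(2)] cW finX unfolding W_def by simp
      have E1: "G x * fact (w - 1) = fact n * Px"
      proof -
        have s1: "(X \<union> Y) - {x} = (X - {x}) \<union> (Y - {x})" "(Y \<union> Z) - {x} = (Y - {x}) \<union> (Z - {x})" by auto
        have n1: "n = card (U - {x})" using Suc.hyps(2) xU by simp
        have s2: "(X - {x}) \<union> (Y - {x}) \<union> (Z - {x}) \<subseteq> U - {x}" using Suc.prems by auto
        have d1: "(X - {x}) \<inter> (Y - {x}) = {}" "(X - {x}) \<inter> (Z - {x}) = {}" "(Y - {x}) \<inter> (Z - {x}) = {}"
          using Suc.prems by auto
        have fU: "finite (U - {x})" using finU by simp
        have "G x * fact (card (X - {x}) + card (Y - {x}) + card (Z - {x})) = fact (card (U - {x})) * Px"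
          unfolding G_def Px_def s1 by (rule Suc.hyps(1)[OF n1 fU d1 s2])
        thus ?thesis unfolding wx n1[symmetric] .
      qed
      have E2: "card D * Px = P"
      proof -
        consider (a) "D = X" "x \<in> X" | (b) "D = Y" "x \<in> Y" | (c) "D = Z" "x \<in> Z"
          using x unfolding D_def by (auto split: if_splits)
        thus ?thesis
        proof cases
          case a
          hence "x \<notin> Y" "x \<notin> Z" using Suc.prems by auto
          hence r: "Y - {x} = Y" "Z - {x} = Z" by auto
          show ?thesis using card_fact_remove[OF finX(1) a(2)] unfolding Px_def P_def r a(1)
            by (metis (no_types, lifting) mult.assoc mult.left_commute)
        next
          case b
          hence "x \<notin> X" "x \<notin> Z" using Suc.prems by auto
          hence r: "X - {x} = X" "Z - {x} = Z" by auto
          show ?thesis using card_fact_remove[OF finX(2) b(2)] unfolding Px_def P_def r b(1)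
            by (metis (no_types, lifting) mult.assoc mult.left_commute)
        next
          case c
          hence "x \<notin> X" "x \<notin> Y" using Suc.prems by auto
          hence r: "X - {x} = X" "Y - {x} = Y" by auto
          show ?thesis using card_fact_remove[OF finX(3) c(2)] unfolding Px_def P_def r c(1)
            by (metis (no_types, lifting) mult.assoc mult.left_commute)
        qed
      qed
      have E3: "fact w = w * fact (w - 1)" using wpos
        by (cases w) auto
      have "card D * (G x * fact w) = card D * w * (G x * fact (w - 1))" by (simp add: E3 ac_simps)
      also have "\<dots> = card D * w * (fact n * Px)" by (simp only: E1)
      also have "\<dots> = w * (fact n * P)" by (simp add: E2[symmetric] ac_simps)
      finally show ?thesis .
    qed
    have "card D * ((\<Sum>x\<in>D. G x) * fact w) = (\<Sum>x\<in>D. card D * (G x * fact w))"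
      by (simp add: sum_distrib_right sum_distrib_left)
    also have "\<dots> = (\<Sum>x\<in>D. w * (fact n * P))" using G2 by simp
    also have "\<dots> = card D * (w * (fact n * P))" by simp
    finally show ?thesis using dpos by simp
  qed
  have "card {xs \<in> permutations_of_set U. pat (X \<union> Y) (Y \<union> Z) xs} * fact w
      = (card U - w) * (fact n * P) + w * (fact n * P)" using N S1 S2 by (simp add: distrib_right)
  also have "\<dots> = card U * (fact n * P)" using wle by (simp add: add_mult_distrib[symmetric])
  also have "\<dots> = fact (card U) * P" using Suc.hyps(2)[symmetric] by (simp add: algebra_simps)
  finally show ?case unfolding w_def P_def .
qed

lemma count_AB:
  assumes "finite U" "A \<union> B \<subseteq> U"
  shows "real (card {xs \<in> permutations_of_set U. pat A B xs}) *
           (real (card (A \<union> B) choose card (A - B)) * real (card B choose card (A \<inter> B)))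
         = fact (card U)"
proof -
  have fin: "finite A" "finite B" using assms finite_subset by auto
  have e1: "(A - B) \<union> (A \<inter> B) = A" "(A \<inter> B) \<union> (B - A) = B" by auto
  have c1: "card (A \<union> B) = card (A - B) + card B"
  proof -
    have "A \<union> B = (A - B) \<union> B" by auto
    hence "card (A \<union> B) = card ((A - B) \<union> B)" by simp
    also have "\<dots> = card (A - B) + card B" using fin by (intro card_Un_disjoint) auto
    finally show ?thesis .
  qed
  have c2: "card B = card (A \<inter> B) + card (B - A)"
  proof -
    have "B = (A \<inter> B) \<union> (B - A)" by auto
    hence "card B = card ((A \<inter> B) \<union> (B - A))" by simp
    also have "\<dots> = card (A \<inter> B) + card (B - A)" using fin by (intro card_Un_disjoint) auto
    finally show ?thesis .
  qed
  have cnt: "card {xs \<in> permutations_of_set U. pat A B xs} * fact (card (A - B) + card (A \<inter> B) + card (B - A))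
         = fact (card U) * (fact (card (A - B)) * fact (card (A \<inter> B)) * fact (card (B - A)))"
    using count[of U "A - B" "A \<inter> B" "B - A"] assms e1 by auto
  have b1: "fact (card (A - B)) * fact (card B) * (card (A \<union> B) choose card (A - B)) = (fact (card (A \<union> B)) :: nat)"
    using binomial_fact_lemma[of "card (A - B)" "card (A \<union> B)"] c1 by simp
  have b2: "fact (card (A \<inter> B)) * fact (card (B - A)) * (card B choose card (A \<inter> B)) = (fact (card B) :: nat)"
    using binomial_fact_lemma[of "card (A \<inter> B)" "card B"] c2 by simp
  define N where "N = card {xs \<in> permutations_of_set U. pat A B xs}"
  define C1 where "C1 = card (A \<union> B) choose card (A - B)"
  define C2 where "C2 = card B choose card (A \<inter> B)"
  define P :: nat where "P = fact (card (A - B)) * fact (card (A \<inter> B)) * fact (card (B - A))"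
  have "fact (card (A \<union> B)) = fact (card (A - B)) * fact (card B) * C1"
    using b1 unfolding C1_def by simp
  also have "\<dots> = fact (card (A - B)) * (fact (card (A \<inter> B)) * fact (card (B - A)) * C2) * C1"
    using b2 unfolding C2_def by simp
  also have "\<dots> = C1 * C2 * P" unfolding P_def by (simp only: ac_simps)
  finally have h: "fact (card (A \<union> B)) = C1 * C2 * P" .
  have w: "card (A - B) + card (A \<inter> B) + card (B - A) = card (A \<union> B)" using c1 c2 by simp
  have "N * fact (card (A \<union> B)) = fact (card U) * P" using cnt unfolding N_def P_def w .
  hence "N * (C1 * C2) * P = fact (card U) * P" unfolding h by (simp only: mult.assoc)
  moreover have "P \<noteq> 0" unfolding P_def by simp
  ultimately have "N * (C1 * C2) = fact (card U)" by simp
  hence "real (N * (C1 * C2)) = real (fact (card U))" by simp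
  thus ?thesis unfolding N_def C1_def C2_def by (simp add: of_nat_mult)
qed

lemma aux_div: "x * c = f \<Longrightarrow> f > 0 \<Longrightarrow> 1 / c = x / (f::real)"
  by (cases "c = 0") (auto simp: field_simps)

theorem theorem1p9:
  fixes t :: nat and I :: "'i set" and A B :: "'i \<Rightarrow> 'a set"
  assumes "t \<ge> 1"
    and "finite I"
    and "\<And>i. i \<in> I \<Longrightarrow> finite (A i) \<and> finite (B i)"
    and a: "\<And>i. i \<in> I \<Longrightarrow> card (A i \<inter> B i) \<le> t"
    and b: "\<And>i j. i \<in> I \<Longrightarrow> j \<in> I \<Longrightarrow> i \<noteq> j \<Longrightarrow> card (A i \<inter> B j) \<ge> t"
    and c: "\<And>i j. i \<in> I \<Longrightarrow> j \<in> I \<Longrightarrow> i \<noteq> j \<Longrightarrow> A i \<inter> B i = A j \<inter> B j \<Longrightarrow>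
              \<not> (A i \<inter> B j = A i \<inter> B i \<and> A i \<inter> B i = A j \<inter> B i)"
  shows "(\<Sum>i\<in>I. 1 / (real (card (A i \<union> B i) choose card (A i - B i))
                     * real (card (B i) choose card (A i \<inter> B i)))) \<le> 1"
proof -
  define U where "U = (\<Union>i\<in>I. A i \<union> B i)"
  have finU: "finite U" unfolding U_def using assms(2,3) by auto
  define S where "S i = {xs \<in> permutations_of_set U. pat (A i) (B i) xs}" for i
  have fpos: "(fact (card U) :: real) > 0" by simp
  have tm: "1 / (real (card (A i \<union> B i) choose card (A i - B i)) * real (card (B i) choose card (A i \<inter> B i)))
      = real (card (S i)) / fact (card U)" if i: "i \<in> I" for i
  proof -
    have "A i \<union> B i \<subseteq> U" using i U_def by auto
    from count_AB[OF finU this] have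
      "real (card (S i)) * (real (card (A i \<union> B i) choose card (A i - B i)) * real (card (B i) choose card (A i \<inter> B i))) = fact (card U)"
      unfolding S_def by simp
    thus ?thesis using fpos by (rule aux_div)
  qed
  have disjS: "S i \<inter> S j = {}" if ij: "i \<in> I" "j \<in> I" "i \<noteq> j" for i j
  proof (rule ccontr)
    assume "S i \<inter> S j \<noteq> {}"
    then obtain xs where p1: "pat (A i) (B i) xs" and p2: "pat (A j) (B j) xs" unfolding S_def by auto
    have ji: "j \<noteq> i" using ij by auto
    from disj[OF assms(1) _ _ _ _ a[OF ij(1)] a[OF ij(2)] b[OF ij] b[OF ij(2) ij(1) ji] p1 p2]
      assms(3) ij c[OF ij] show False by auto
  qed
  have "(\<Sum>i\<in>I. 1 / (real (card (A i \<union> B i) choose card (A i - B i))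
                     * real (card (B i) choose card (A i \<inter> B i))))
        = (\<Sum>i\<in>I. real (card (S i))) / fact (card U)"
    using tm by (simp add: sum_divide_distrib)
  also have "(\<Sum>i\<in>I. real (card (S i))) = real (card (\<Union>i\<in>I. S i))"
    using card_UN_disjoint[OF assms(2), of S] disjS unfolding S_def by (simp add: of_nat_sum)
  also have "card (\<Union>i\<in>I. S i) \<le> card (permutations_of_set U)"
    by (rule card_mono) (auto simp: S_def)
  hence "card (\<Union>i\<in>I. S i) \<le> fact (card U)" using finU by simp
  hence "real (card (\<Union>i\<in>I. S i)) \<le> real (fact (card U))" by (simp only: of_nat_le_iff)
  hence "real (card (\<Union>i\<in>I. S i)) \<le> fact (card U)" by (simp only: of_nat_fact)
  hence "real (card (\<Union>i\<in>I. S i)) / fact (card U) \<le> 1" using fpos by simp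
  finally show ?thesis .
qed

end
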